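(* A 5-ring is $4K_1$-free if and only if it is $2P_3$-free.
   Context: Graphs are finite and simple. $4K_1$ is the edgeless graph on four vertices; $2P_3$ is the disjoint union of two 3-vertex paths; $H$-free means no induced subgraph isomorphic to $H$. A 5-ring is a graph $R$ whose vertex set can be partitioned into nonempty sets $X_0,\dots,X_4$ (indices in $\mathbb{Z}_5$) such that for each $i$, $X_i$ can be ordered as $u^i_1,\dots,u^i_{|X_i|}$ so that $X_i\subseteq N_R[u^i_{|X_i|}]\subseteq\dots\subseteq N_R[u^i_1]=X_{i-1}\cup X_i\cup X_{i+1}$, where $N_R[v]$ denotes the closed neighbourhood of $v$. *)

theory Defs
  imports Main
begin

definition simple_graph :: "'a set \<Rightarrow> ('a \<Rightarrow> 'a \<Rightarrow> bool) \<Rightarrow> bool" where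
  "simple_graph V E \<longleftrightarrow> finite V \<and> (\<forall>x y. E x y \<longrightarrow> x \<in> V \<and> y \<in> V)
     \<and> (\<forall>x y. E x y \<longrightarrow> E y x) \<and> (\<forall>x. \<not> E x x)"

definition closed_nbhd :: "'a set \<Rightarrow> ('a \<Rightarrow> 'a \<Rightarrow> bool) \<Rightarrow> 'a \<Rightarrow> 'a set" where
  "closed_nbhd V E v = {w \<in> V. w = v \<or> E v w}"

definition has_induced :: "'b set \<Rightarrow> ('b \<Rightarrow> 'b \<Rightarrow> bool) \<Rightarrow> 'a set \<Rightarrow> ('a \<Rightarrow> 'a \<Rightarrow> bool) \<Rightarrow> bool" where
  "has_induced VH EH V E \<longleftrightarrow> (\<exists>f. inj_on f VH \<and> f ` VH \<subseteq> V \<and>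
      (\<forall>x\<in>VH. \<forall>y\<in>VH. EH x y \<longleftrightarrow> E (f x) (f y)))"

definition H_free :: "'b set \<Rightarrow> ('b \<Rightarrow> 'b \<Rightarrow> bool) \<Rightarrow> 'a set \<Rightarrow> ('a \<Rightarrow> 'a \<Rightarrow> bool) \<Rightarrow> bool" where
  "H_free VH EH V E \<longleftrightarrow> \<not> has_induced VH EH V E"

definition fourK1_V :: "nat set" where "fourK1_V = {0..<4}"
definition fourK1_E :: "nat \<Rightarrow> nat \<Rightarrow> bool" where "fourK1_E x y = False"

definition twoP3_V :: "nat set" where "twoP3_V = {0..<6}"
definition twoP3_E :: "nat \<Rightarrow> nat \<Rightarrow> bool" where
  "twoP3_E x y \<longleftrightarrow> {x, y} \<in> {{0,1},{1,2},{3,4},{4,5}}"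

definition five_ring :: "'a set \<Rightarrow> ('a \<Rightarrow> 'a \<Rightarrow> bool) \<Rightarrow> bool" where
  "five_ring V E \<longleftrightarrow> (\<exists>X :: nat \<Rightarrow> 'a set.
      (\<forall>i<5. X i \<noteq> {}) \<and> (\<Union>i<5. X i) = V \<and>
      (\<forall>i<5. \<forall>j<5. i \<noteq> j \<longrightarrow> X i \<inter> X j = {}) \<and>
      (\<forall>i<5. \<exists>us. distinct us \<and> set us = X i \<and>
          X i \<subseteq> closed_nbhd V E (last us) \<and>
          (\<forall>k. Suc k < length us \<longrightarrow> closed_nbhd V E (us ! Suc k) \<subseteq> closed_nbhd V E (us ! k)) \<and>
          closed_nbhd V E (us ! 0) = X ((i + 4) mod 5) \<union> X i \<union> X ((i + 1) mod 5)))"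

end

theory Submission
  imports Defs
begin

lemma twoP3_E_iff: "twoP3_E x y \<longleftrightarrow> (x=0\<and>y=1 \<or> x=1\<and>y=0 \<or> x=1\<and>y=2 \<or> x=2\<and>y=1 \<or>
   x=3\<and>y=4 \<or> x=4\<and>y=3 \<or> x=4\<and>y=5 \<or> x=5\<and>y=4)"
  unfolding twoP3_E_def by (auto simp: doubleton_eq_iff)

lemma core:
  fixes X :: "nat \<Rightarrow> 'a set"
  assumes sym: "\<forall>x y. E x y \<longrightarrow> E y x"
  and irr: "\<forall>x. \<not> E x x"
  and sub: "\<forall>i<5. X i \<subseteq> V"
  and disj: "\<forall>i<5. \<forall>j<5. i\<noteq>j \<longrightarrow> X i \<inter> X j = {}"
  and clique: "\<forall>i<5. \<forall>x\<in>X i. \<forall>y\<in>X i. x\<noteq>y \<longrightarrow> E x y"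
  and far: "\<forall>i<5. \<forall>x\<in>X i. \<forall>y\<in>X ((i+2) mod 5) \<union> X((i+3) mod 5). \<not>E x y"
  and top: "\<forall>i<5. u i \<in> X i \<and> (\<forall>y\<in>X ((i+1) mod 5) \<union> X((i+4) mod 5). E (u i) y)"
  and m: "m<5"
  and a: "a1 \<in> X((m+1) mod 5)" "a2 \<in> X((m+2) mod 5)" "a3 \<in> X((m+3) mod 5)" "a4 \<in> X((m+4) mod 5)"
  and st: "\<not>E a1 a2" "\<not>E a1 a3" "\<not>E a1 a4" "\<not>E a2 a3" "\<not>E a2 a4" "\<not>E a3 a4"
  shows "has_induced twoP3_V twoP3_E V E"
proof -
  define i1 where "i1 = (m+1) mod 5"
  define i2 where "i2 = (m+2) mod 5"
  define i3 where "i3 = (m+3) mod 5"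
  define i4 where "i4 = (m+4) mod 5"
  have lt: "i1<5" "i2<5" "i3<5" "i4<5" unfolding i1_def i2_def i3_def i4_def by auto
  have r: "(i1+1) mod 5 = i2" "(i1+2) mod 5 = i3" "(i1+3) mod 5 = i4" "(i2+2) mod 5 = i4"
     "(i4+4) mod 5 = i3"
    unfolding i1_def i2_def i3_def i4_def by presburger+
  have ne: "i1\<noteq>i2" "i1\<noteq>i3" "i1\<noteq>i4" "i2\<noteq>i3" "i2\<noteq>i4" "i3\<noteq>i4"
    unfolding i1_def i2_def i3_def i4_def using m by presburger+
  define b1 where "b1 = u i1"
  define b4 where "b4 = u i4"
  have b1X: "b1 \<in> X i1" and b4X: "b4 \<in> X i4" using top lt unfolding b1_def b4_def by auto
  have aX: "a1 \<in> X i1" "a2 \<in> X i2" "a3 \<in> X i3" "a4 \<in> X i4"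
    using a unfolding i1_def i2_def i3_def i4_def by auto
  have e1: "E b1 a2" using top lt(1) aX(2) r(1) unfolding b1_def by auto
  have e2: "E b4 a3" using top lt(4) aX(3) r(5) unfolding b4_def by auto
  have d1: "b1 \<noteq> a1" using e1 st(1) by auto
  have d4: "b4 \<noteq> a4" using e2 st(6) sym by auto
  have e3: "E b1 a1" using clique lt(1) b1X aX(1) d1 by auto
  have e4: "E b4 a4" using clique lt(4) b4X aX(4) d4 by auto
  have n1: "\<not> E b1 a3" "\<not> E b1 b4" "\<not> E b1 a4" "\<not> E a1 b4"
    using far lt(1) b1X aX b4X r by auto
  have n2: "\<not> E a2 b4" using far lt(2) aX b4X r by auto
  have dj: "\<And>i j x y. i<5 \<Longrightarrow> j<5 \<Longrightarrow> i\<noteq>j \<Longrightarrow> x\<in>X i \<Longrightarrow> y \<in> X j \<Longrightarrow> x\<noteq>y"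
    using disj by blast
  have dd: "a1\<noteq>a2" "a1\<noteq>a3" "a1\<noteq>a4" "a1\<noteq>b4" "b1\<noteq>a2" "b1\<noteq>a3" "b1\<noteq>a4" "b1\<noteq>b4"
    "a2\<noteq>a3" "a2\<noteq>a4" "a2\<noteq>b4" "a3\<noteq>a4" "a3\<noteq>b4"
    using dj[OF lt(1) lt(2) ne(1)] dj[OF lt(1) lt(3) ne(2)] dj[OF lt(1) lt(4) ne(3)]
      dj[OF lt(2) lt(3) ne(4)] dj[OF lt(2) lt(4) ne(5)] dj[OF lt(3) lt(4) ne(6)]
      aX b1X b4X by blast+
  define f where "f = (\<lambda>k::nat. if k=0 then a1 else if k=1 then b1 else if k=2 then a2
     else if k=3 then a3 else if k=4 then b4 else a4)"
  have V6: "twoP3_V = {0,1,2,3,4,5}" unfolding twoP3_V_def by auto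
  have inj: "inj_on f twoP3_V"
    unfolding V6 inj_on_def f_def using dd d1 d4 by auto
  have img: "f ` twoP3_V \<subseteq> V"
    unfolding V6 f_def using sub lt aX b1X b4X by auto
  have edges: "\<forall>x\<in>twoP3_V. \<forall>y\<in>twoP3_V. twoP3_E x y \<longleftrightarrow> E (f x) (f y)"
  proof -
    have s: "E a1 b1" "E a2 b1" "E a3 b4" "E a4 b4" "\<not> E a3 b1" "\<not> E b4 b1" "\<not> E a4 b1" "\<not> E b4 a1"
      "\<not> E b4 a2" "\<not> E a2 a1" "\<not> E a3 a1" "\<not> E a4 a1" "\<not> E a3 a2" "\<not> E a4 a2" "\<not> E a4 a3"
      "\<not> E a1 a1" "\<not> E b1 b1" "\<not> E a2 a2" "\<not> E a3 a3" "\<not> E b4 b4" "\<not> E a4 a4"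
      using e1 e2 e3 e4 n1 n2 st irr sym by metis+
    show ?thesis unfolding V6 twoP3_E_iff f_def using e1 e2 e3 e4 n1 n2 st s by simp
  qed
  show ?thesis unfolding has_induced_def using inj img edges by blast
qed
lemma chain_sub:
  assumes "\<forall>k. Suc k < n \<longrightarrow> g (Suc k) \<subseteq> (g k :: 'b set)"
  shows "k \<le> j \<Longrightarrow> j < n \<Longrightarrow> g j \<subseteq> g k"
proof (induction j)
  case 0 then show ?case by simp
next
  case (Suc j)
  show ?case
  proof (cases "k = Suc j")
    case True then show ?thesis by simp
  next
    case False
    then have "k \<le> j" using Suc.prems by simp
    then have "g j \<subseteq> g k" using Suc by simp
    moreover have "g (Suc j) \<subseteq> g j" using assms Suc.prems by blast
    ultimately show ?thesis by blast
  qed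
qed

lemma ring_facts:
  assumes G: "simple_graph V E" and R: "five_ring V E"
  obtains X :: "nat \<Rightarrow> 'a set" and u where
    "\<forall>i<5. X i \<subseteq> V" "(\<Union>i<5. X i) = V"
    "\<forall>i<5. \<forall>j<5. i\<noteq>j \<longrightarrow> X i \<inter> X j = {}"
    "\<forall>i<5. \<forall>x\<in>X i. \<forall>y\<in>X i. x\<noteq>y \<longrightarrow> E x y"
    "\<forall>i<5. \<forall>x\<in>X i. \<forall>y\<in>X ((i+2) mod 5) \<union> X((i+3) mod 5). \<not>E x y"
    "\<forall>i<5. u i \<in> X i \<and> (\<forall>y\<in>X ((i+1) mod 5) \<union> X((i+4) mod 5). E (u i) y)"
proof -
  let ?N = "closed_nbhd V E"
  obtain X :: "nat \<Rightarrow> 'a set" where ne: "\<forall>i<5. X i \<noteq> {}" and un: "(\<Union>i<5. X i) = V"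
    and disj: "\<forall>i<5. \<forall>j<5. i \<noteq> j \<longrightarrow> X i \<inter> X j = {}"
    and us: "\<forall>i<5. \<exists>us. distinct us \<and> set us = X i \<and>
          X i \<subseteq> ?N (last us) \<and>
          (\<forall>k. Suc k < length us \<longrightarrow> ?N (us ! Suc k) \<subseteq> ?N (us ! k)) \<and>
          ?N (us ! 0) = X ((i + 4) mod 5) \<union> X i \<union> X ((i + 1) mod 5)"
    using R unfolding five_ring_def by blast
  from us obtain U where U: "\<forall>i<5. distinct (U i) \<and> set (U i) = X i \<and>
          X i \<subseteq> ?N (last (U i)) \<and>
          (\<forall>k. Suc k < length (U i) \<longrightarrow> ?N (U i ! Suc k) \<subseteq> ?N (U i ! k)) \<and>
          ?N (U i ! 0) = X ((i + 4) mod 5) \<union> X i \<union> X ((i + 1) mod 5)"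
    by metis
  have sym: "\<And>x y. E x y \<Longrightarrow> E y x" and inV: "\<And>x y. E x y \<Longrightarrow> y \<in> V"
    using G unfolding simple_graph_def by blast+
  have sub: "\<forall>i<5. X i \<subseteq> V" using un by blast
  have big: "?N x \<subseteq> ?N (U i ! 0)" and small: "?N (last (U i)) \<subseteq> ?N x"
    if "i<5" "x \<in> X i" for i x
  proof -
    have "x \<in> set (U i)" using U that by blast
    then obtain k where k: "k < length (U i)" "U i ! k = x" by (auto simp: in_set_conv_nth)
    have ch: "\<forall>k. Suc k < length (U i) \<longrightarrow> ?N (U i ! Suc k) \<subseteq> ?N (U i ! k)" using U that by blast
    show "?N x \<subseteq> ?N (U i ! 0)" using chain_sub[OF ch, of 0 k] k by simp
    have "U i \<noteq> []" using k by auto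
    then have "last (U i) = U i ! (length (U i) - 1)" by (simp add: last_conv_nth)
    then show "?N (last (U i)) \<subseteq> ?N x" using chain_sub[OF ch, of k "length (U i) - 1"] k by simp
  qed
  have clique: "\<forall>i<5. \<forall>x\<in>X i. \<forall>y\<in>X i. x\<noteq>y \<longrightarrow> E x y"
  proof (intro allI impI ballI)
    fix i x y assume "i<5" "x \<in> X i" "y \<in> X i" "x \<noteq> y"
    then have "x \<in> ?N y" using small[of i y] U by blast
    then show "E x y" using \<open>x\<noteq>y\<close> sym unfolding closed_nbhd_def by auto
  qed
  have nb: "y \<in> X ((i + 4) mod 5) \<union> X i \<union> X ((i + 1) mod 5)" if "i<5" "x \<in> X i" "E x y" for i x y
  proof -
    have "y \<in> ?N x" using that inV unfolding closed_nbhd_def by auto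
    then show ?thesis using big[OF that(1,2)] U that(1) by blast
  qed
  have far: "\<forall>i<5. \<forall>x\<in>X i. \<forall>y\<in>X ((i+2) mod 5) \<union> X((i+3) mod 5). \<not>E x y"
  proof (intro allI impI ballI notI)
    fix i x y assume i: "i<5" and x: "x \<in> X i" and y: "y\<in>X ((i+2) mod 5) \<union> X((i+3) mod 5)" and e: "E x y"
    have y2: "y \<in> X ((i + 4) mod 5) \<union> X i \<union> X ((i + 1) mod 5)" using nb[OF i x e] .
    have d: "\<And>a b. a<5 \<Longrightarrow> b<5 \<Longrightarrow> a\<noteq>b \<Longrightarrow> y \<in> X a \<Longrightarrow> y \<in> X b \<Longrightarrow> False" using disj by blast
    have l: "(i+2) mod 5 < 5" "(i+3) mod 5 < 5" "(i+4) mod 5 < 5" "(i+1) mod 5 < 5" by auto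
    have n: "(i+2) mod 5 \<noteq> (i+4) mod 5" "(i+2) mod 5 \<noteq> i" "(i+2) mod 5 \<noteq> (i+1) mod 5"
      "(i+3) mod 5 \<noteq> (i+4) mod 5" "(i+3) mod 5 \<noteq> i" "(i+3) mod 5 \<noteq> (i+1) mod 5" using i by presburger+
    show False using y y2 d[OF l(1) l(3) n(1)] d[OF l(1) i n(2)] d[OF l(1) l(4) n(3)]
      d[OF l(2) l(3) n(4)] d[OF l(2) i n(5)] d[OF l(2) l(4) n(6)] by blast
  qed
  define u :: "nat \<Rightarrow> 'a" where "u = (\<lambda>i. U i ! 0)"
  have top: "\<forall>i<5. u i \<in> X i \<and> (\<forall>y\<in>X ((i+1) mod 5) \<union> X((i+4) mod 5). E (u i) y)"
  proof (intro allI impI conjI ballI)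
    fix i :: nat assume i: "i<5"
    have "U i \<noteq> []" using U ne i by (metis set_empty)
    then show ui: "u i \<in> X i" unfolding u_def using U i by (metis length_greater_0_conv nth_mem)
    fix y assume y: "y\<in>X ((i+1) mod 5) \<union> X((i+4) mod 5)"
    have l: "(i+4) mod 5 < 5" "(i+1) mod 5 < 5" by auto
    have n: "(i+1) mod 5 \<noteq> i" "(i+4) mod 5 \<noteq> i" using i by presburger+
    have "y \<noteq> u i" using y ui disj l n i by blast
    moreover have "y \<in> ?N (u i)" using U i y unfolding u_def by blast
    ultimately show "E (u i) y" unfolding closed_nbhd_def by auto
  qed
  show ?thesis using that[OF sub un disj clique far top] .
qed

theorem proposition6p5:
  fixes V :: "'a set" and E :: "'a \<Rightarrow> 'a \<Rightarrow> bool"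
  assumes "simple_graph V E" and "five_ring V E"
  shows "H_free fourK1_V fourK1_E V E \<longleftrightarrow> H_free twoP3_V twoP3_E V E"
proof
  assume "H_free fourK1_V fourK1_E V E"
  then show "H_free twoP3_V twoP3_E V E"
    unfolding H_free_def
  proof (elim contrapos_nn)
    assume "has_induced twoP3_V twoP3_E V E"
    then obtain g where g: "inj_on g twoP3_V" "g ` twoP3_V \<subseteq> V"
      "\<forall>x\<in>twoP3_V. \<forall>y\<in>twoP3_V. twoP3_E x y \<longleftrightarrow> E (g x) (g y)"
      unfolding has_induced_def by blast
    define h where "h = (\<lambda>k::nat. g (if k=0 then 0 else if k=1 then 2 else if k = 2 then 3 else 5))"
    have V6: "twoP3_V = {0,1,2,3,4,5}" unfolding twoP3_V_def by auto
    have V4: "fourK1_V = {0,1,2,3}" unfolding fourK1_V_def by auto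
    have gi: "g a \<noteq> g b" if "a \<in> twoP3_V" "b \<in> twoP3_V" "a \<noteq> b" for a b
      using g(1) that unfolding inj_on_def by blast
    have ne: "\<not> E (g a) (g b)" if "a \<in> {0,2,3,5}" "b \<in> {0,2,3,5}" for a b :: nat
    proof -
      have "\<not> twoP3_E a b" using that unfolding twoP3_E_iff by auto
      moreover have "a \<in> twoP3_V" "b \<in> twoP3_V" using that unfolding V6 by auto
      ultimately show ?thesis using g(3) by blast
    qed
    show "has_induced fourK1_V fourK1_E V E"
      unfolding has_induced_def
    proof (intro exI conjI)
      have d: "g 0 \<noteq> g 2" "g 0 \<noteq> g 3" "g 0 \<noteq> g 5" "g 2 \<noteq> g 3" "g 2 \<noteq> g 5" "g 3 \<noteq> g 5"
        using gi unfolding V6 by simp_all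
      show "inj_on h fourK1_V" unfolding V4 inj_on_def h_def using d by (simp add: eq_commute)
      have "g 0 \<in> V" "g 2 \<in> V" "g 3 \<in> V" "g 5 \<in> V" using g(2) unfolding V6 by auto
      then show "h ` fourK1_V \<subseteq> V" unfolding V4 h_def by auto
      have nn: "\<not> E (g a) (g b)" if "a \<in> {0,2,3,5}" "b \<in> {0,2,3,5}" for a b using ne that by blast
      show "\<forall>x\<in>fourK1_V. \<forall>y\<in>fourK1_V. fourK1_E x y = E (h x) (h y)"
        unfolding V4 h_def fourK1_E_def by (simp add: nn)
    qed
  qed
next
  assume "H_free twoP3_V twoP3_E V E"
  then show "H_free fourK1_V fourK1_E V E"
    unfolding H_free_def
  proof (elim contrapos_nn)
    assume "has_induced fourK1_V fourK1_E V E"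
    then obtain g :: "nat \<Rightarrow> 'a" where g0: "inj_on g fourK1_V" "g ` fourK1_V \<subseteq> V"
      "\<forall>x\<in>fourK1_V. \<forall>y\<in>fourK1_V. fourK1_E x y \<longleftrightarrow> E (g x) (g y)"
      unfolding has_induced_def by blast
    have g: "inj_on g {0..<4}" "g ` {0..<4} \<subseteq> V"
      "\<forall>x\<in>{0..<4}. \<forall>y\<in>{0..<4}. \<not> E (g x) (g y)"
      using g0 unfolding fourK1_V_def fourK1_E_def by simp_all
    obtain X :: "nat \<Rightarrow> 'a set" and u where R: "\<forall>i<5. X i \<subseteq> V" "(\<Union>i<5. X i) = V"
      "\<forall>i<5. \<forall>j<5. i\<noteq>j \<longrightarrow> X i \<inter> X j = {}"
      "\<forall>i<5. \<forall>x\<in>X i. \<forall>y\<in>X i. x\<noteq>y \<longrightarrow> E x y"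
      "\<forall>i<5. \<forall>x\<in>X i. \<forall>y\<in>X ((i+2) mod 5) \<union> X((i+3) mod 5). \<not>E x y"
      "\<forall>i<5. u i \<in> X i \<and> (\<forall>y\<in>X ((i+1) mod 5) \<union> X((i+4) mod 5). E (u i) y)"
      by (rule ring_facts[OF assms])
    have exi: "\<exists>i. i < 5 \<and> g k \<in> X i" if "k < 4" for k
    proof -
      have "g k \<in> V" using g(2) that by auto
      then have "g k \<in> (\<Union>i<5. X i)" using R(2) by simp
      then show ?thesis by auto
    qed
    define p where "p k = (SOME i. i < 5 \<and> g k \<in> X i)" for k
    have p: "p k < 5 \<and> g k \<in> X (p k)" if "k < 4" for k
      unfolding p_def using someI_ex[OF exi[OF that]] .
    have pinj: "inj_on p {0..<4}"
    proof (rule inj_onI)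
      fix a b assume a: "a \<in> {0..<4}" and b: "b \<in> {0..<4}" and e: "p a = p b"
      show "a = b"
      proof (rule ccontr)
        assume "a \<noteq> b"
        then have "g a \<noteq> g b" using g(1) a b unfolding inj_on_def by blast
        moreover have "g a \<in> X (p a)" "g b \<in> X (p a)" "p a < 5" using p[of a] p[of b] a b e by auto
        ultimately have "E (g a) (g b)" using R(4) by blast
        then show False using g(3) a b by blast
      qed
    qed
    define P where "P = p ` {0..<4}"
    have cP: "card P = 4" unfolding P_def using card_image[OF pinj] by simp
    have sP: "P \<subseteq> {0..<5}" unfolding P_def using p by auto
    obtain m where m: "m < 5" "m \<notin> P"
    proof -
      have "\<not> {0..<5} \<subseteq> P"
      proof
        assume "{0..<5} \<subseteq> P"
        then have "card {0..<5::nat} \<le> card P" using card_mono[of P] unfolding P_def by blast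
        then show False using cP by simp
      qed
      then obtain m' where "m' \<in> {0..<5}" "m' \<notin> P" by blast
      then show ?thesis using that by simp
    qed
    have "P \<subseteq> {0..<5} - {m}" using sP m by auto
    moreover have "card ({0..<5} - {m}) = card P" using cP m by simp
    ultimately have PE: "P = {0..<5} - {m}" by (intro card_subset_eq) auto
    have ex: "\<exists>k<4. g k \<in> X ((m+j) mod 5)" if "j \<in> {1,2,3,4}" for j
    proof -
      have "(m+j) mod 5 \<noteq> m" using that m(1) by auto presburger+
      then have "(m+j) mod 5 \<in> P" unfolding PE by auto
      then obtain k where k: "k \<in> {0..<4}" "p k = (m+j) mod 5" unfolding P_def by auto
      then have "k < 4" by simp
      then have "g k \<in> X ((m+j) mod 5)" using p[of k] k(2) by simp
      then show ?thesis using \<open>k < 4\<close> by blast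
    qed
    obtain k1 where k1: "k1<4" "g k1 \<in> X ((m+1) mod 5)" using ex[of 1] by auto
    obtain k2 where k2: "k2<4" "g k2 \<in> X ((m+2) mod 5)" using ex[of 2] by auto
    obtain k3 where k3: "k3<4" "g k3 \<in> X ((m+3) mod 5)" using ex[of 3] by auto
    obtain k4 where k4: "k4<4" "g k4 \<in> X ((m+4) mod 5)" using ex[of 4] by auto
    have st: "\<not>E (g a) (g b)" if "a<4" "b<4" for a b using g(3) that by auto
    have sym: "\<forall>x y. E x y \<longrightarrow> E y x" and irr: "\<forall>x. \<not> E x x"
      using assms(1) unfolding simple_graph_def by blast+
    show "has_induced twoP3_V twoP3_E V E"
      by (rule core[OF sym irr R(1,3,4,5,6) m(1) k1(2) k2(2) k3(2) k4(2)
        st[OF k1(1) k2(1)] st[OF k1(1) k3(1)] st[OF k1(1) k4(1)]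
        st[OF k2(1) k3(1)] st[OF k2(1) k4(1)] st[OF k3(1) k4(1)]])
  qed
qed

end
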